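(* There is a constant $c>0$ such that for every $\omega$-word $\xi\in X^\omega$ that is quasiperiodic (with some quasiperiod $q\in X^*\setminus\{e\}$) there is $n_\xi\in\mathbb{N}$ with $f(\xi,n)\le c\cdot t_P^n$ for all $n\ge n_\xi$, where $t_P\approx1.324718$ is the unique real root of $t^3-t-1$.
   Context: $X$ is a finite alphabet with $|X|\ge2$; $X^*$ the finite words (empty word $e$), $X^\omega$ the infinite words, $X^n$ the words of length $n$. $w\sqsubseteq\eta$ means $w$ is a prefix of $\eta$. An $\omega$-word $\xi$ is quasiperiodic with quasiperiod $q\in X^*\setminus\{e\}$ if for every $j\in\mathbb{N}$ there is a prefix $u_j\sqsubseteq\xi$ with $j-|q|<|u_j|\le j$ and $u_j\cdot q\sqsubseteq\xi$. $f(\xi,n):=|\mathrm{infix}(\xi)\cap X^n|$ is the number of distinct factors (subwords) of $\xi$ of length $n$. *)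

theory Defs
  imports Complex_Main
begin

definition pref :: "(nat \<Rightarrow> 'a) \<Rightarrow> nat \<Rightarrow> 'a list" where
  "pref \<xi> n = map \<xi> [0..<n]"

definition is_prefix :: "'a list \<Rightarrow> (nat \<Rightarrow> 'a) \<Rightarrow> bool" where
  "is_prefix w \<xi> \<longleftrightarrow> pref \<xi> (length w) = w"

definition quasiperiod :: "(nat \<Rightarrow> 'a) \<Rightarrow> 'a list \<Rightarrow> bool" where
  "quasiperiod \<xi> q \<longleftrightarrow> q \<noteq> [] \<and>
     (\<forall>j::nat. \<exists>u. is_prefix u \<xi> \<and> int j - int (length q) < int (length u) \<and>
        length u \<le> j \<and> is_prefix (u @ q) \<xi>)"

definition quasiperiodic :: "(nat \<Rightarrow> 'a) \<Rightarrow> bool" where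
  "quasiperiodic \<xi> \<longleftrightarrow> (\<exists>q. quasiperiod \<xi> q)"

definition infixes :: "(nat \<Rightarrow> 'a) \<Rightarrow> 'a list set" where
  "infixes \<xi> = {map \<xi> [i..<i+m] | i m. True}"

definition subword_complexity :: "(nat \<Rightarrow> 'a) \<Rightarrow> nat \<Rightarrow> nat" where
  "subword_complexity \<xi> n = card (infixes \<xi> \<inter> {w. length w = n})"

definition t_P :: real where
  "t_P = (THE t::real. t ^ 3 - t - 1 = 0)"

end

theory Submission
  imports Defs
begin

lemma root_gt1: fixes x :: real assumes "x^3 - x - 1 = 0" shows "x > 1"
proof (rule ccontr)
  assume "\<not> x > 1" hence x: "x \<le> 1" by simp
  show False
  proof (cases "x \<ge> 0")
    case True
    have "x*x \<le> 1" using True x by (simp add: mult_le_one)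
    hence "x*(x*x) \<le> x" using True by (simp add: mult_left_le)
    thus False using assms by (simp add: power3_eq_cube)
  next
    case False
    hence "x*x > 0" by (simp add: zero_less_mult_iff)
    hence c: "x*(x*x) < 0" using False by (simp add: mult_neg_pos)
    show False
    proof (cases "x \<ge> -1")
      case True thus False using c assms by (simp add: power3_eq_cube)
    next
      case False
      have "-x > 1" using False by linarith
      hence "(-x)*(-x) > 1" using less_1_mult by blast
      hence "x*x > 1" by simp
      hence "x*(x*x) < x" using \<open>\<not> x \<ge> 0\<close> by (simp add: mult_less_cancel_left1 )
      thus False using assms by (simp add: power3_eq_cube)
    qed
  qed
qed

lemma tP_props: "t_P^3 = t_P + 1 \<and> 1.324 \<le> t_P \<and> t_P \<le> 1.325"
proof -
  have "\<exists>x::real. 1.324 \<le> x \<and> x \<le> 1.325 \<and> (\<lambda>x. x^3 - x - 1) x = 0"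
  proof (rule IVT)
    show "(\<lambda>x::real. x^3 - x - 1) 1.324 \<le> 0" by (simp add: power3_eq_cube)
    show "0 \<le> (\<lambda>x::real. x^3 - x - 1) 1.325" by (simp add: power3_eq_cube)
    show "(1.324::real) \<le> 1.325" by simp
    show "\<forall>x. 1.324 \<le> x \<and> x \<le> 1.325 \<longrightarrow> isCont (\<lambda>x::real. x^3 - x - 1) x" by (auto intro!: continuous_intros)
  qed
  then obtain r :: real where r: "1.324 \<le> r" "r \<le> 1.325" "r^3 - r - 1 = 0" by auto
  have "t_P = r" unfolding t_P_def
  proof (rule the_equality)
    show "r^3 - r - 1 = 0" by fact
    fix y :: real assume y: "y^3 - y - 1 = 0"
    have "y > 1" by (rule root_gt1[OF y])
    have "r > 1" using r by simp
    have "(y - r) * (y^2 + y*r + r^2 - 1) = 0" using y r(3) by (simp add: algebra_simps power2_eq_square power3_eq_cube)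
    moreover have "y^2 + y*r + r^2 - 1 > 0"
    proof -
      have "y^2 > 1" "y*r > 1" "r^2 > 1" using \<open>y>1\<close> \<open>r>1\<close> by (auto simp: one_less_power less_1_mult)
      thus ?thesis by simp
    qed
    ultimately show "y = r" by simp
  qed
  thus ?thesis using r by simp
qed

lemma kraft_gen:
  assumes "1 \<le> p" "p \<le> m" "m < 2*p"
  shows "(\<Sum>d=p..m. (1/t_P)^d) \<le> 1 \<and> (6 \<le> m \<longrightarrow> (\<Sum>d=p..m. (1/t_P)^d) < 1)"
proof -
  define t where "t = t_P"
  define x where "x = 1/t"
  have t: "t^3 = t + 1" "1.324 \<le> t" "t \<le> 1.325" using tP_props t_def by auto
  have x0: "0 < x" using t by (simp add: x_def)
  have xl: "x \<ge> (754/1000)" using t unfolding x_def by (simp add: field_simps)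
  have xu: "x \<le> (756/1000)" using t unfolding x_def by (simp add: field_simps)
  have x1: "x < 1" using xu by simp
  have xt: "x * t = 1" using t by (simp add: x_def)
  have h3: "x^3 = 1 - x^2"
  proof -
    have "x^3 * t^3 = 1" by (simp add: x_def power_divide) (use t in auto)
    hence "x^3 * (t+1) = 1" using t by simp
    moreover have "x^3 * t = x^2" using xt by (simp add: power2_eq_square power3_eq_cube algebra_simps)
    ultimately show ?thesis by (simp add: algebra_simps)
  qed
  have e: "\<And>k. x^Suc k = x * x^k" by simp
  have h4: "x^4 = x - 1 + x^2"
  proof - have "x^4 = x * x^3" using e[of 3] by simp
    also have "... = x * (1 - x^2)" by (simp only: h3)
    also have "... = x - x^3" by (simp add: algebra_simps power2_eq_square power3_eq_cube)
    finally show ?thesis using h3 by simp qed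
  have h5: "x^5 = 1 - x"
  proof - have "x^5 = x * x^4" using e[of 4] by simp
    also have "... = x * (x - 1 + x^2)" by (simp only: h4)
    also have "... = x^2 - x + x^3" by (simp add: algebra_simps power2_eq_square power3_eq_cube)
    finally show ?thesis using h3 by simp qed
  have h6: "x^6 = x - x^2"
  proof - have "x^6 = x * x^5" using e[of 5] by simp
    also have "... = x * (1 - x)" by (simp only: h5)
    also have "... = x - x^2" by (simp add: algebra_simps power2_eq_square power3_eq_cube)
    finally show ?thesis using h3 by simp qed
  have h7: "x^7 = 2*x^2 - 1"
  proof - have "x^7 = x * x^6" using e[of 6] by simp
    also have "... = x * (x - x^2)" by (simp only: h6)
    also have "... = x^2 - x^3" by (simp add: algebra_simps power2_eq_square power3_eq_cube)
    finally show ?thesis using h3 by simp qed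
  have h8: "x^8 = 2 - 2*x^2 - x"
  proof - have "x^8 = x * x^7" using e[of 7] by simp
    also have "... = x * (2*x^2 - 1)" by (simp only: h7)
    also have "... = 2*x^3 - x" by (simp add: algebra_simps power2_eq_square power3_eq_cube)
    finally show ?thesis using h3 by simp qed
  have yl: "x^2 \<ge> (754/1000) * x" using xl x0 by (simp add: power2_eq_square)
  have yu: "x^2 \<le> (756/1000) * x" using xu x0 by (simp add: power2_eq_square)
  have sq: "x^2 - 2*x + 1 > 0"
  proof - have "(1 - x)^2 > 0" using x1 by simp thus ?thesis by (simp add: power2_eq_square algebra_simps) qed
  have S: "(\<Sum>d=p..m. x^d) = (x^p - x^Suc m) / (1 - x)" using assms x1 by (simp add: sum_gp)
  have key: "x^p - x^Suc m \<le> x^5 \<and> (6 \<le> m \<longrightarrow> x^p - x^Suc m < x^5)"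
  proof (cases "p \<ge> 5")
    case True
    have "x^p \<le> x^5" using True x0 x1 by (simp add: power_decreasing)
    moreover have "x^Suc m > 0" using x0 by simp
    ultimately show ?thesis by simp
  next
    case False
    hence "(p=1\<and>m=1) \<or> (p=2\<and>m=2) \<or> (p=2\<and>m=3) \<or> (p=3\<and>m=3) \<or> (p=3\<and>m=4) \<or> (p=3\<and>m=5) \<or> (p=4\<and>m=4) \<or> (p=4\<and>m=5) \<or> (p=4\<and>m=6) \<or> (p=4\<and>m=7)" using assms by arith
    thus ?thesis
    proof (elim disjE)
      assume A: "p=1\<and>m=1"
      hence px: "x^p = x" and sm: "x^Suc m = x^2" and hm: "m = 1" by (simp_all add: power2_eq_square)
      show ?thesis unfolding px sm
      proof
        show "x - x^2 \<le> x^5" using h3 h4 h5 h6 h7 h8 yl yu sq xl xu by linarith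
        show "6 \<le> m \<longrightarrow> x - x^2 < x^5"
        proof
          assume "6 \<le> m"
          show "x - x^2 < x^5" using hm \<open>6 \<le> m\<close> by simp
        qed
      qed
    next
      assume A: "p=2\<and>m=2"
      hence px: "x^p = x^2" and sm: "x^Suc m = x^3" and hm: "m = 2" by (simp_all add: power2_eq_square)
      show ?thesis unfolding px sm
      proof
        show "x^2 - x^3 \<le> x^5" using h3 h4 h5 h6 h7 h8 yl yu sq xl xu by linarith
        show "6 \<le> m \<longrightarrow> x^2 - x^3 < x^5"
        proof
          assume "6 \<le> m"
          show "x^2 - x^3 < x^5" using hm \<open>6 \<le> m\<close> by simp
        qed
      qed
    next
      assume A: "p=2\<and>m=3"
      hence px: "x^p = x^2" and sm: "x^Suc m = x^4" and hm: "m = 3" by (simp_all add: power2_eq_square)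
      show ?thesis unfolding px sm
      proof
        show "x^2 - x^4 \<le> x^5" using h3 h4 h5 h6 h7 h8 yl yu sq xl xu by linarith
        show "6 \<le> m \<longrightarrow> x^2 - x^4 < x^5"
        proof
          assume "6 \<le> m"
          show "x^2 - x^4 < x^5" using hm \<open>6 \<le> m\<close> by simp
        qed
      qed
    next
      assume A: "p=3\<and>m=3"
      hence px: "x^p = x^3" and sm: "x^Suc m = x^4" and hm: "m = 3" by (simp_all add: power2_eq_square)
      show ?thesis unfolding px sm
      proof
        show "x^3 - x^4 \<le> x^5" using h3 h4 h5 h6 h7 h8 yl yu sq xl xu by linarith
        show "6 \<le> m \<longrightarrow> x^3 - x^4 < x^5"
        proof
          assume "6 \<le> m"
          show "x^3 - x^4 < x^5" using hm \<open>6 \<le> m\<close> by simp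
        qed
      qed
    next
      assume A: "p=3\<and>m=4"
      hence px: "x^p = x^3" and sm: "x^Suc m = x^5" and hm: "m = 4" by (simp_all add: power2_eq_square)
      show ?thesis unfolding px sm
      proof
        show "x^3 - x^5 \<le> x^5" using h3 h4 h5 h6 h7 h8 yl yu sq xl xu by linarith
        show "6 \<le> m \<longrightarrow> x^3 - x^5 < x^5"
        proof
          assume "6 \<le> m"
          show "x^3 - x^5 < x^5" using hm \<open>6 \<le> m\<close> by simp
        qed
      qed
    next
      assume A: "p=3\<and>m=5"
      hence px: "x^p = x^3" and sm: "x^Suc m = x^6" and hm: "m = 5" by (simp_all add: power2_eq_square)
      show ?thesis unfolding px sm
      proof
        show "x^3 - x^6 \<le> x^5" using h3 h4 h5 h6 h7 h8 yl yu sq xl xu by linarith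
        show "6 \<le> m \<longrightarrow> x^3 - x^6 < x^5"
        proof
          assume "6 \<le> m"
          show "x^3 - x^6 < x^5" using hm \<open>6 \<le> m\<close> by simp
        qed
      qed
    next
      assume A: "p=4\<and>m=4"
      hence px: "x^p = x^4" and sm: "x^Suc m = x^5" and hm: "m = 4" by (simp_all add: power2_eq_square)
      show ?thesis unfolding px sm
      proof
        show "x^4 - x^5 \<le> x^5" using h3 h4 h5 h6 h7 h8 yl yu sq xl xu by linarith
        show "6 \<le> m \<longrightarrow> x^4 - x^5 < x^5"
        proof
          assume "6 \<le> m"
          show "x^4 - x^5 < x^5" using hm \<open>6 \<le> m\<close> by simp
        qed
      qed
    next
      assume A: "p=4\<and>m=5"
      hence px: "x^p = x^4" and sm: "x^Suc m = x^6" and hm: "m = 5" by (simp_all add: power2_eq_square)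
      show ?thesis unfolding px sm
      proof
        show "x^4 - x^6 \<le> x^5" using h3 h4 h5 h6 h7 h8 yl yu sq xl xu by linarith
        show "6 \<le> m \<longrightarrow> x^4 - x^6 < x^5"
        proof
          assume "6 \<le> m"
          show "x^4 - x^6 < x^5" using hm \<open>6 \<le> m\<close> by simp
        qed
      qed
    next
      assume A: "p=4\<and>m=6"
      hence px: "x^p = x^4" and sm: "x^Suc m = x^7" and hm: "m = 6" by (simp_all add: power2_eq_square)
      show ?thesis unfolding px sm
      proof
        show "x^4 - x^7 \<le> x^5" using h3 h4 h5 h6 h7 h8 yl yu sq xl xu by linarith
        show "6 \<le> m \<longrightarrow> x^4 - x^7 < x^5"
        proof
          assume "6 \<le> m"
          show "x^4 - x^7 < x^5" using h3 h4 h5 h6 h7 h8 yl yu sq xl xu by linarith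
        qed
      qed
    next
      assume A: "p=4\<and>m=7"
      hence px: "x^p = x^4" and sm: "x^Suc m = x^8" and hm: "m = 7" by (simp_all add: power2_eq_square)
      show ?thesis unfolding px sm
      proof
        show "x^4 - x^8 \<le> x^5" using h3 h4 h5 h6 h7 h8 yl yu sq xl xu by linarith
        show "6 \<le> m \<longrightarrow> x^4 - x^8 < x^5"
        proof
          assume "6 \<le> m"
          show "x^4 - x^8 < x^5" using h3 h4 h5 h6 h7 h8 yl yu sq xl xu by linarith
        qed
      qed
    qed
  qed
  have "x^5 > 0" using x0 by simp
  hence "1 - x > 0" using h5 by simp
  show ?thesis unfolding t_def[symmetric] x_def[symmetric] S using key h5 \<open>1-x>0\<close>
    by (simp add: divide_le_eq_1 divide_less_eq_1)
qed

definition occ :: "(nat \<Rightarrow> 'a) \<Rightarrow> 'a list \<Rightarrow> nat \<Rightarrow> bool" where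
  "occ \<xi> q s \<longleftrightarrow> (\<forall>k<length q. \<xi> (s+k) = q!k)"

definition fac :: "(nat \<Rightarrow> 'a) \<Rightarrow> nat \<Rightarrow> nat \<Rightarrow> 'a list" where
  "fac \<xi> i n = map \<xi> [i..<i+n]"

definition anch :: "(nat \<Rightarrow> 'a) \<Rightarrow> 'a list \<Rightarrow> nat \<Rightarrow> 'a list set" where
  "anch \<xi> q N = (\<lambda>s. fac \<xi> s N) ` {s. occ \<xi> q s}"

lemma map_occ: "map \<xi> [a..<a+length q] = q \<longleftrightarrow> occ \<xi> q a"
proof
  assume A: "map \<xi> [a..<a+length q] = q"
  show "occ \<xi> q a" unfolding occ_def
  proof (intro allI impI)
    fix k assume "k < length q"
    hence "map \<xi> [a..<a+length q] ! k = \<xi> (a+k)" by simp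
    thus "\<xi> (a+k) = q!k" using A by simp
  qed
next
  assume "occ \<xi> q a"
  thus "map \<xi> [a..<a+length q] = q" unfolding occ_def by (intro nth_equalityI) simp_all
qed

lemma fac_len[simp]: "length (fac \<xi> i n) = n" by (simp add: fac_def)

lemma fac_split: "fac \<xi> i (a + b) = fac \<xi> i a @ fac \<xi> (i+a) b"
proof -
  have e: "i + (a+b) = (i+a) + b" by simp
  show ?thesis unfolding fac_def e upt_add_eq_append[OF le_add1] map_append ..
qed

lemma occ_fac: assumes "occ \<xi> q s" "a \<le> d" "d \<le> length q"
  shows "fac \<xi> (s+a) (d-a) = drop a (take d q)"
proof (rule nth_equalityI)
  show "length (fac \<xi> (s+a) (d-a)) = length (drop a (take d q))" using assms by simp
  fix k assume "k < length (fac \<xi> (s+a) (d-a))"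
  hence k: "k < d - a" by simp
  have "fac \<xi> (s+a) (d-a) ! k = \<xi> (s + (a+k))" using k by (simp add: fac_def add.assoc)
  also have "... = q ! (a+k)" using assms(1,3) k unfolding occ_def by simp
  also have "... = drop a (take d q) ! k" using k assms by simp
  finally show "fac \<xi> (s+a) (d-a) ! k = drop a (take d q) ! k" .
qed

lemma occ_fac0: assumes "occ \<xi> q s" "d \<le> length q"
  shows "fac \<xi> s d = take d q"
  using occ_fac[OF assms(1) _ assms(2), of 0] by simp

lemma pref_append: "pref \<xi> (a + b) = pref \<xi> a @ map \<xi> [a..<a+b]"
  unfolding pref_def upt_add_eq_append[OF le0] map_append by simp

lemma qp_iff: "quasiperiod \<xi> q \<longleftrightarrow> q \<noteq> [] \<and> (\<forall>j. \<exists>s. occ \<xi> q s \<and> s \<le> j \<and> j < s + length q)"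
proof
  assume A: "quasiperiod \<xi> q"
  show "q \<noteq> [] \<and> (\<forall>j. \<exists>s. occ \<xi> q s \<and> s \<le> j \<and> j < s + length q)"
  proof (intro conjI allI)
    show "q \<noteq> []" using A by (simp add: quasiperiod_def)
    fix j
    obtain u where u: "is_prefix u \<xi>" "int j - int (length q) < int (length u)" "length u \<le> j" "is_prefix (u @ q) \<xi>"
      using A unfolding quasiperiod_def by blast
    have "pref \<xi> (length u + length q) = u @ q" using u(4) by (simp add: is_prefix_def)
    hence "pref \<xi> (length u) @ map \<xi> [length u..<length u + length q] = u @ q" by (simp add: pref_append)
    hence "map \<xi> [length u..<length u + length q] = q" by (simp add: pref_def)
    hence "occ \<xi> q (length u)" by (simp add: map_occ)
    thus "\<exists>s. occ \<xi> q s \<and> s \<le> j \<and> j < s + length q" using u(2,3) by (intro exI[of _ "length u"]) auto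
  qed
next
  assume A: "q \<noteq> [] \<and> (\<forall>j. \<exists>s. occ \<xi> q s \<and> s \<le> j \<and> j < s + length q)"
  show "quasiperiod \<xi> q" unfolding quasiperiod_def
  proof (intro conjI allI)
    show "q \<noteq> []" using A by simp
    fix j
    obtain s where s: "occ \<xi> q s" "s \<le> j" "j < s + length q" using A by blast
    have l: "length (pref \<xi> s) = s" by (simp add: pref_def)
    have "is_prefix (pref \<xi> s) \<xi>" by (simp add: is_prefix_def l)
    moreover have "is_prefix (pref \<xi> s @ q) \<xi>"
      using s(1) by (simp add: is_prefix_def l pref_append map_occ)
    ultimately show "\<exists>u. is_prefix u \<xi> \<and> int j - int (length q) < int (length u) \<and> length u \<le> j \<and> is_prefix (u @ q) \<xi>"
      using s l by (intro exI[of _ "pref \<xi> s"]) auto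
  qed
qed

lemma infix_eq: "infixes \<xi> \<inter> {w. length w = n} = range (\<lambda>i. fac \<xi> i n)"
proof
  show "infixes \<xi> \<inter> {w. length w = n} \<subseteq> range (\<lambda>i. fac \<xi> i n)"
  proof
    fix w assume "w \<in> infixes \<xi> \<inter> {w. length w = n}"
    then obtain i m where w: "w = map \<xi> [i..<i+m]" "length w = n" unfolding infixes_def by blast
    hence "m = n" by simp
    thus "w \<in> range (\<lambda>i. fac \<xi> i n)" using w by (simp add: fac_def)
  qed
  show "range (\<lambda>i. fac \<xi> i n) \<subseteq> infixes \<xi> \<inter> {w. length w = n}"
  proof
    fix w assume "w \<in> range (\<lambda>i. fac \<xi> i n)"
    then obtain i where "w = fac \<xi> i n" by blast
    hence "w = map \<xi> [i..<i+n]" "length w = n" by (simp_all add: fac_def)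
    thus "w \<in> infixes \<xi> \<inter> {w. length w = n}" unfolding infixes_def by blast
  qed
qed

lemma finite_len: "finite {w::'a::finite list. length w = n}"
  using finite_lists_length_eq[of "UNIV::'a set" n] by simp

lemma finite_anch: "finite (anch (\<xi>::nat\<Rightarrow>'a::finite) q N)"
  by (rule finite_subset[OF _ finite_len[of N]]) (auto simp: anch_def)


lemma next_occ:
  assumes Q: "\<forall>j. \<exists>s. occ \<xi> q s \<and> s \<le> j \<and> j < s + length q" and "occ \<xi> q s"
  shows "\<exists>s'. occ \<xi> q s' \<and> s < s' \<and> s' \<le> s + length q"
proof -
  obtain s' where "occ \<xi> q s'" "s' \<le> s + length q" "s + length q < s' + length q"
    using Q by blast
  thus ?thesis by auto
qed

lemma anch_small: "N \<le> length q \<Longrightarrow> anch \<xi> q N \<subseteq> {take N q}"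
  by (auto simp: anch_def occ_fac0)

lemma anch_step:
  assumes Q: "\<forall>j. \<exists>s. occ \<xi> q s \<and> s \<le> j \<and> j < s + length q"
    and H: "\<forall>s s'. occ \<xi> q s \<longrightarrow> occ \<xi> q s' \<longrightarrow> s < s' \<longrightarrow> p \<le> s' - s"
    and N: "length q < N"
  shows "anch \<xi> q N \<subseteq> (\<Union>d\<in>{p..length q}. (\<lambda>w. take d q @ w) ` anch \<xi> q (N-d))"
proof
  fix w assume "w \<in> anch \<xi> q N"
  then obtain s where s: "occ \<xi> q s" "w = fac \<xi> s N" by (auto simp: anch_def)
  obtain s' where s': "occ \<xi> q s'" "s < s'" "s' \<le> s + length q" using next_occ[OF Q s(1)] by blast
  define d where "d = s' - s"
  have d: "p \<le> d" "d \<le> length q" using H s s' d_def by auto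
  have "N = d + (N - d)" using d N by simp
  hence "w = fac \<xi> s d @ fac \<xi> (s+d) (N-d)" using s(2) fac_split[of \<xi> s d "N-d"] by simp
  also have "fac \<xi> s d = take d q" using occ_fac0[OF s(1) d(2)] .
  also have "s + d = s'" using d_def s' by simp
  finally have "w = take d q @ fac \<xi> s' (N-d)" .
  moreover have "fac \<xi> s' (N-d) \<in> anch \<xi> q (N-d)" unfolding anch_def using s'(1) by blast
  ultimately have "w \<in> (\<lambda>w. take d q @ w) ` anch \<xi> q (N-d)" by (rule image_eqI)
  moreover have "d \<in> {p..length q}" using d by simp
  ultimately show "w \<in> (\<Union>d\<in>{p..length q}. (\<lambda>w. take d q @ w) ` anch \<xi> q (N-d))" by (rule UN_I[rotated])
qed

lemma anch_bound:
  fixes \<xi> :: "nat \<Rightarrow> 'a::finite" and lam :: real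
  assumes Q: "\<forall>j. \<exists>s. occ \<xi> q s \<and> s \<le> j \<and> j < s + length q"
    and H: "\<forall>s s'. occ \<xi> q s \<longrightarrow> occ \<xi> q s' \<longrightarrow> s < s' \<longrightarrow> p \<le> s' - s"
    and p1: "1 \<le> p" and lam: "1 \<le> lam" and K: "(\<Sum>d=p..length q. (1/lam)^d) \<le> 1"
  shows "real (card (anch \<xi> q N)) \<le> lam^N"
proof (induction N rule: less_induct)
  case (less N)
  show ?case
  proof (cases "N \<le> length q")
    case True
    have "card (anch \<xi> q N) \<le> card {take N q}" by (rule card_mono[OF _ anch_small[OF True]]) simp
    hence "real (card (anch \<xi> q N)) \<le> 1" by simp
    also have "1 \<le> lam^N" using lam by (rule one_le_power)
    finally show ?thesis .
  next
    case False
    let ?U = "\<Union>d\<in>{p..length q}. (\<lambda>w. take d q @ w) ` anch \<xi> q (N-d)"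
    have lN: "length q < N" using False by simp
    have "card (anch \<xi> q N) \<le> card ?U"
      by (rule card_mono[OF _ anch_step[OF Q H lN]]) (intro finite_UN_I finite_imageI finite_atLeastAtMost finite_anch)
    also have "... \<le> (\<Sum>d\<in>{p..length q}. card ((\<lambda>w. take d q @ w) ` anch \<xi> q (N-d)))"
      by (rule card_UN_le) simp
    also have "... \<le> (\<Sum>d\<in>{p..length q}. card (anch \<xi> q (N-d)))"
      by (rule sum_mono, rule card_image_le, rule finite_anch)
    finally have "real (card (anch \<xi> q N)) \<le> real (\<Sum>d\<in>{p..length q}. card (anch \<xi> q (N-d)))"
      by (simp only: of_nat_le_iff)
    also have "... = (\<Sum>d\<in>{p..length q}. real (card (anch \<xi> q (N-d))))" by simp
    also have "... \<le> (\<Sum>d\<in>{p..length q}. lam^(N-d))"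
    proof (rule sum_mono)
      fix d assume "d \<in> {p..length q}"
      hence "N - d < N" using p1 False by auto
      thus "real (card (anch \<xi> q (N-d))) \<le> lam^(N-d)" by (rule less.IH)
    qed
    also have "... = (\<Sum>d\<in>{p..length q}. lam^N * (1/lam)^d)"
    proof (rule sum.cong)
      fix d assume "d \<in> {p..length q}"
      hence "d \<le> N" using False by auto
      thus "lam^(N-d) = lam^N * (1/lam)^d" using lam by (simp add: power_diff power_one_over divide_inverse power_inverse)
    qed simp
    also have "... = lam^N * (\<Sum>d=p..length q. (1/lam)^d)" by (simp add: sum_distrib_left)
    also have "... \<le> lam^N" using K lam by (simp add: mult_left_le)
    finally show ?thesis .
  qed
qed


lemma factor_sub:
  assumes Q: "\<forall>j. \<exists>s. occ \<xi> q s \<and> s \<le> j \<and> j < s + length q" and n: "length q \<le> n"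
  shows "range (\<lambda>i. fac \<xi> i n) \<subseteq>
     (\<Union>d\<in>{1..length q}. \<Union>j\<in>{1..length q}. (\<lambda>w. drop (d-j) (take d q) @ w) ` anch \<xi> q (n-j))"
proof
  fix w assume "w \<in> range (\<lambda>i. fac \<xi> i n)"
  then obtain i where w: "w = fac \<xi> i n" by blast
  define S where "S = {s. occ \<xi> q s \<and> s \<le> i}"
  have fS: "finite S" by (rule finite_subset[of _ "{..i}"]) (auto simp: S_def)
  have neS: "S \<noteq> {}" using Q unfolding S_def by blast
  define s where "s = Max S"
  have "s \<in> S" using Max_in[OF fS neS] s_def by simp
  hence s: "occ \<xi> q s" "s \<le> i" by (simp_all add: S_def)
  obtain s' where s': "occ \<xi> q s'" "s < s'" "s' \<le> s + length q" using next_occ[OF Q s(1)] by blast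
  have "i < s'"
  proof (rule ccontr)
    assume "\<not> i < s'"
    hence "s' \<in> S" using s'(1) by (simp add: S_def)
    hence "s' \<le> s" using Max_ge[OF fS] s_def by simp
    thus False using s'(2) by simp
  qed
  define d where "d = s' - s"
  define j where "j = s' - i"
  have dj: "1 \<le> d" "d \<le> length q" "1 \<le> j" "j \<le> d" "j \<le> n" "d - j = i - s" "i + j = s'"
    using s s' \<open>i < s'\<close> n by (auto simp: d_def j_def)
  have "n = j + (n - j)" using dj by simp
  hence "w = fac \<xi> i j @ fac \<xi> (i+j) (n-j)" using w fac_split[of \<xi> i j "n-j"] by simp
  also have "fac \<xi> i j = drop (d-j) (take d q)"
  proof -
    have "fac \<xi> (s + (d-j)) (d - (d-j)) = drop (d-j) (take d q)"
      using occ_fac[OF s(1), of "d-j" d] dj by simp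
    moreover have "s + (d-j) = i" "d - (d-j) = j" using dj s by auto
    ultimately show ?thesis by simp
  qed
  finally have w2: "w = drop (d-j) (take d q) @ fac \<xi> s' (n-j)" using dj by simp
  have "fac \<xi> s' (n-j) \<in> anch \<xi> q (n-j)" unfolding anch_def using s'(1) by blast
  with w2 have "w \<in> (\<lambda>w. drop (d-j) (take d q) @ w) ` anch \<xi> q (n-j)" by (rule image_eqI)
  moreover have "j \<in> {1..length q}" "d \<in> {1..length q}" using dj by auto
  ultimately show "w \<in> (\<Union>d\<in>{1..length q}. \<Union>j\<in>{1..length q}. (\<lambda>w. drop (d-j) (take d q) @ w) ` anch \<xi> q (n-j))"
    by blast
qed

lemma factors_bound:
  fixes \<xi> :: "nat \<Rightarrow> 'a::finite" and lam :: real
  assumes Q: "\<forall>j. \<exists>s. occ \<xi> q s \<and> s \<le> j \<and> j < s + length q"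
    and H: "\<forall>s s'. occ \<xi> q s \<longrightarrow> occ \<xi> q s' \<longrightarrow> s < s' \<longrightarrow> p \<le> s' - s"
    and p1: "1 \<le> p" and lam: "1 \<le> lam" and K: "(\<Sum>d=p..length q. (1/lam)^d) \<le> 1"
    and n: "length q \<le> n"
  shows "real (subword_complexity \<xi> n) \<le> real (length q) * real (length q) * lam^n"
proof -
  let ?m = "length q"
  let ?B = "\<lambda>d j. (\<lambda>w. drop (d-j) (take d q) @ w) ` anch \<xi> q (n-j)"
  have fB: "\<And>d j. finite (?B d j)" by (intro finite_imageI finite_anch)
  have "subword_complexity \<xi> n = card (range (\<lambda>i. fac \<xi> i n))"
    by (simp add: subword_complexity_def infix_eq)
  also have "... \<le> card (\<Union>d\<in>{1..?m}. \<Union>j\<in>{1..?m}. ?B d j)"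
    by (rule card_mono[OF _ factor_sub[OF Q n]]) (intro finite_UN_I finite_atLeastAtMost fB)
  also have "... \<le> (\<Sum>d\<in>{1..?m}. card (\<Union>j\<in>{1..?m}. ?B d j))" by (rule card_UN_le) simp
  also have "... \<le> (\<Sum>d\<in>{1..?m}. \<Sum>j\<in>{1..?m}. card (?B d j))"
    by (rule sum_mono, rule card_UN_le) simp
  also have "... \<le> (\<Sum>d\<in>{1..?m}. \<Sum>j\<in>{1..?m}. card (anch \<xi> q (n-j)))"
    by (intro sum_mono card_image_le finite_anch)
  finally have "real (subword_complexity \<xi> n) \<le> real (\<Sum>d\<in>{1..?m}. \<Sum>j\<in>{1..?m}. card (anch \<xi> q (n-j)))"
    by (simp only: of_nat_le_iff)
  also have "... = (\<Sum>d\<in>{1..?m}. \<Sum>j\<in>{1..?m}. real (card (anch \<xi> q (n-j))))" by simp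
  also have "... \<le> (\<Sum>d\<in>{1..?m}. \<Sum>j\<in>{1..?m}. lam^n)"
  proof (intro sum_mono)
    fix d j
    have "real (card (anch \<xi> q (n-j))) \<le> lam^(n-j)" by (rule anch_bound[OF Q H p1 lam K])
    also have "... \<le> lam^n" using lam by (intro power_increasing) auto
    finally show "real (card (anch \<xi> q (n-j))) \<le> lam^n" .
  qed
  also have "... = real ?m * real ?m * lam^n" by simp
  finally show ?thesis .
qed


definition per :: "'a list \<Rightarrow> nat \<Rightarrow> bool" where
  "per q d \<longleftrightarrow> 0 < d \<and> d \<le> length q \<and> (\<forall>i. i + d < length q \<longrightarrow> q!i = q!(i+d))"

lemma occ_period:
  assumes "occ \<xi> q s" "occ \<xi> q s'" "s < s'" "s' - s < length q"
  shows "per q (s'-s)"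
  unfolding per_def
proof (intro conjI allI impI)
  show "0 < s' - s" "s' - s \<le> length q" using assms by auto
  fix i assume i: "i + (s'-s) < length q"
  have "q!(i + (s'-s)) = \<xi> (s + (i + (s'-s)))" using assms(1) i unfolding occ_def by simp
  also have "s + (i + (s'-s)) = s' + i" using assms(3) by simp
  also have "\<xi> (s' + i) = q!i" using assms(2) i unfolding occ_def by simp
  finally show "q!i = q!(i + (s'-s))" by simp
qed

lemma border_qp:
  assumes A: "quasiperiod \<xi> q" and P: "per q p" and p2: "2*p \<le> length q"
  shows "quasiperiod \<xi> (take (length q - p) q)"
proof -
  let ?m = "length q"
  let ?b = "take (?m - p) q"
  have Q: "\<forall>j. \<exists>s. occ \<xi> q s \<and> s \<le> j \<and> j < s + ?m" using A qp_iff by blast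
  have p0: "0 < p" using P by (simp add: per_def)
  have lb: "length ?b = ?m - p" by simp
  have "0 < length ?b" using p0 p2 lb by linarith
  hence ne: "?b \<noteq> []" by (metis length_greater_0_conv)
  have o1: "occ \<xi> ?b s" if "occ \<xi> q s" for s
    using that unfolding occ_def by simp
  have o2: "occ \<xi> ?b (s+p)" if "occ \<xi> q s" for s
    unfolding occ_def
  proof (intro allI impI)
    fix k assume k: "k < length ?b"
    hence k': "k + p < ?m" by simp
    have "\<xi> (s + p + k) = \<xi> (s + (p + k))" by (simp add: add.assoc)
    also have "... = q!(p+k)" using that k' unfolding occ_def by simp
    also have "... = q!k" using P k' unfolding per_def by (simp add: add.commute)
    also have "... = ?b!k" using k by simp
    finally show "\<xi> (s + p + k) = ?b!k" .
  qed
  have "\<forall>j. \<exists>s. occ \<xi> ?b s \<and> s \<le> j \<and> j < s + length ?b"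
  proof
    fix j
    obtain s where s: "occ \<xi> q s" "s \<le> j" "j < s + ?m" using Q by blast
    show "\<exists>s. occ \<xi> ?b s \<and> s \<le> j \<and> j < s + length ?b"
    proof (cases "j < s + (?m - p)")
      case True thus ?thesis using o1[OF s(1)] s lb by auto
    next
      case False
      hence "s + p \<le> j" "j < (s + p) + (?m - p)" using s p2 by auto
      thus ?thesis using o2[OF s(1)] lb by auto
    qed
  qed
  thus ?thesis using ne qp_iff by blast
qed

lemma per_xi:
  fixes \<xi> :: "nat \<Rightarrow> 'a::finite"
  assumes "quasiperiodic \<xi>"
  shows "\<exists>n0. \<forall>n\<ge>n0. real (subword_complexity \<xi> n) \<le> 25 * t_P^n"
proof -
  define P where "P m \<longleftrightarrow> (\<exists>q. quasiperiod \<xi> q \<and> length q = m)" for m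
  have "\<exists>m. P m" using assms unfolding quasiperiodic_def P_def by blast
  define m where "m = (LEAST m. P m)"
  have "P m" unfolding m_def using \<open>\<exists>m. P m\<close> by (metis LeastI)
  then obtain q where q: "quasiperiod \<xi> q" "length q = m" unfolding P_def by blast
  have minq: "m \<le> length q'" if "quasiperiod \<xi> q'" for q'
    unfolding m_def using that by (intro Least_le) (auto simp: P_def)
  have Q: "\<forall>j. \<exists>s. occ \<xi> q s \<and> s \<le> j \<and> j < s + length q" and qne: "q \<noteq> []"
    using q(1) qp_iff by blast+
  have "0 < m" using qne q(2) by (metis length_greater_0_conv)
  hence "per q m" using q(2) by (simp add: per_def)
  define p where "p = (LEAST d. per q d)"
  have pp: "per q p" unfolding p_def using \<open>per q m\<close> by (metis LeastI)
  have pmin: "p \<le> d" if "per q d" for d unfolding p_def using that by (rule Least_le)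
  have p1: "1 \<le> p" and pm: "p \<le> m" using pp q(2) by (auto simp: per_def)
  have p2: "m < 2*p"
  proof (rule ccontr)
    assume "\<not> m < 2*p"
    hence "quasiperiod \<xi> (take (length q - p) q)" using border_qp[OF q(1) pp] q(2) by simp
    hence "m \<le> m - p" using minq q(2) by fastforce
    thus False using p1 pm by simp
  qed
  have H: "\<forall>s s'. occ \<xi> q s \<longrightarrow> occ \<xi> q s' \<longrightarrow> s < s' \<longrightarrow> p \<le> s' - s"
  proof (intro allI impI)
    fix s s' assume a: "occ \<xi> q s" "occ \<xi> q s'" "s < s'"
    show "p \<le> s' - s"
    proof (cases "s' - s < length q")
      case True thus ?thesis using occ_period[OF a True] pmin by blast
    next
      case False thus ?thesis using pm q(2) by simp
    qed
  qed
  have KR: "(\<Sum>d=p..m. (1/t_P)^d) \<le> 1 \<and> (6 \<le> m \<longrightarrow> (\<Sum>d=p..m. (1/t_P)^d) < 1)"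
    by (rule kraft_gen[OF p1 pm p2])
  have t1: "1 < t_P" using tP_props by simp
  show ?thesis
  proof (cases "m \<le> 5")
    case True
    show ?thesis
    proof (intro exI allI impI)
      fix n assume n: "m \<le> n"
      have "real (subword_complexity \<xi> n) \<le> real m * real m * t_P^n"
        using factors_bound[OF Q H p1 _ _ , of t_P n] KR q(2) t1 n by simp
      also have "... \<le> 25 * t_P^n"
      proof (rule mult_right_mono)
        have "real m \<le> 5" using True by simp
        hence "real m * real m \<le> 5 * 5" by (intro mult_mono) auto
        thus "real m * real m \<le> 25" by simp
        show "0 \<le> t_P^n" using t1 by simp
      qed
      finally show "real (subword_complexity \<xi> n) \<le> 25 * t_P^n" .
    qed
  next
    case False
    define S where "S = (\<Sum>d=p..m. (1/t_P)^d)"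
    have S1: "S < 1" using KR False by (simp add: S_def)
    have S0: "0 < S" unfolding S_def using pm t1 by (intro sum_pos) auto
    have m0: "0 < m" using False by simp
    define r where "r = root m S"
    have r0: "0 < r" using S0 m0 by (simp add: r_def)
    have r1: "r < 1" using S1 S0 m0 by (simp add: r_def)
    have rm: "r^m = S" using S0 m0 by (simp add: r_def real_root_pow_pos)
    define lam where "lam = max 1 (t_P * r)"
    have lam1: "1 \<le> lam" by (simp add: lam_def)
    have tr0: "0 < t_P * r" using t1 r0 by simp
    have lamt: "lam < t_P" using t1 r1 r0 by (simp add: lam_def)
    have K: "(\<Sum>d=p..length q. (1/lam)^d) \<le> 1"
    proof -
      have "(\<Sum>d=p..m. (1/lam)^d) \<le> (\<Sum>d=p..m. (1/t_P)^d / r^m)"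
      proof (rule sum_mono)
        fix d assume d: "d \<in> {p..m}"
        have "(1/lam)^d \<le> (1/(t_P*r))^d"
          using tr0 lam1 by (intro power_mono) (auto simp: lam_def divide_simps)
        also have "... = (1/t_P)^d / r^d" by (simp add: power_divide power_mult_distrib)
        also have "... \<le> (1/t_P)^d / r^m"
        proof (rule divide_left_mono)
          show "r^m \<le> r^d" using d r0 r1 by (intro power_decreasing) auto
          show "0 \<le> (1/t_P)^d" using t1 by simp
          show "0 < r^d * r^m" using r0 by simp
        qed
        finally show "(1/lam)^d \<le> (1/t_P)^d / r^m" .
      qed
      also have "... = S / r^m" by (simp add: S_def sum_divide_distrib)
      also have "... = 1" using rm S0 by simp
      finally show ?thesis using q(2) by simp
    qed
    have "(\<lambda>n. (lam/t_P)^n) \<longlonglongrightarrow> 0"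
      using lamt lam1 t1 by (intro LIMSEQ_power_zero) simp
    moreover have "0 < 25 / (real m * real m)" using m0 by simp
    ultimately have "eventually (\<lambda>n. (lam/t_P)^n < 25 / (real m * real m)) sequentially"
      by (rule order_tendstoD(2))
    then obtain N where N: "\<And>n. N \<le> n \<Longrightarrow> (lam/t_P)^n < 25 / (real m * real m)"
      unfolding eventually_sequentially by blast
    show ?thesis
    proof (intro exI allI impI)
      fix n assume n: "max N m \<le> n"
      have "real (subword_complexity \<xi> n) \<le> real m * real m * lam^n"
        using factors_bound[OF Q H p1 lam1 K, of n] q(2) n by simp
      also have "... = real m * real m * (lam/t_P)^n * t_P^n" using t1 by (simp add: power_divide)
      also have "... \<le> 25 * t_P^n"
      proof (rule mult_right_mono)
        have "(lam/t_P)^n < 25 / (real m * real m)" using N n by simp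
        hence "real m * real m * (lam/t_P)^n < 25" using m0 by (simp add: field_simps)
        thus "real m * real m * (lam/t_P)^n \<le> 25" by simp
        show "0 \<le> t_P^n" using t1 by simp
      qed
      finally show "real (subword_complexity \<xi> n) \<le> 25 * t_P^n" .
    qed
  qed
qed

theorem theorem3:
  assumes "card (UNIV :: 'a::finite set) \<ge> 2"
  shows "\<exists>c::real > 0. \<forall>\<xi> :: nat \<Rightarrow> 'a. quasiperiodic \<xi> \<longrightarrow>
           (\<exists>n\<^sub>\<xi>. \<forall>n \<ge> n\<^sub>\<xi>. real (subword_complexity \<xi> n) \<le> c * t_P ^ n)"
  using per_xi by (intro exI[of _ 25]) auto

end
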